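(* Let $M$ be a matroid on a finite set $E$ with $r(M)>0$. If $M$ is a unique expansion matroid, then $M$ is a union minimal matroid.
   Context: For a matroid $M=(E,\mathcal{I})$: $\mathcal{I}(M)$ its independent sets, $\mathcal{B}(M)$ its bases, $r(M)$ the size of a base, $\cup\mathcal{B}(M)$ the union of all bases. For $r(M)>0$, $s(M)=\{A\in\mathcal{I}(M): |A|=r(M)-1\}$. $M$ is a unique expansion matroid if for every $B\in\mathcal{B}(M)$ and every $A\in s(M)$, whenever $e_1,e_2\in B$ satisfy $A\cup\{e_1\}\in\mathcal{B}(M)$ and $A\cup\{e_2\}\in\mathcal{B}(M)$, then $e_1=e_2$. $M$ is union minimal if for every matroid $M_1$ on $E$ with $\cup\mathcal{B}(M_1)=\cup\mathcal{B}(M)$ and $\mathcal{B}(M_1)\subseteq\mathcal{B}(M)$ we have $\mathcal{B}(M_1)=\mathcal{B}(M)$. *)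

theory Defs
  imports Main
begin

definition matroid :: "'a set \<Rightarrow> 'a set set \<Rightarrow> bool" where
  "matroid E \<I> \<longleftrightarrow>
     finite E \<and>
     (\<forall>A\<in>\<I>. A \<subseteq> E) \<and>
     {} \<in> \<I> \<and>
     (\<forall>A B. B \<in> \<I> \<longrightarrow> A \<subseteq> B \<longrightarrow> A \<in> \<I>) \<and>
     (\<forall>A B. A \<in> \<I> \<longrightarrow> B \<in> \<I> \<longrightarrow> card A < card B \<longrightarrow>
        (\<exists>e\<in>B - A. insert e A \<in> \<I>))"

definition bases :: "'a set set \<Rightarrow> 'a set set" where
  "bases \<I> = {B \<in> \<I>. \<forall>C\<in>\<I>. B \<subseteq> C \<longrightarrow> C = B}"

definition mrank :: "'a set set \<Rightarrow> nat" where
  "mrank \<I> = card (SOME B. B \<in> bases \<I>)"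

definition s_sets :: "'a set set \<Rightarrow> 'a set set" where
  "s_sets \<I> = {A \<in> \<I>. card A = mrank \<I> - 1}"

definition unique_expansion :: "'a set set \<Rightarrow> bool" where
  "unique_expansion \<I> \<longleftrightarrow>
     (\<forall>B\<in>bases \<I>. \<forall>A\<in>s_sets \<I>. \<forall>e1\<in>B. \<forall>e2\<in>B.
        insert e1 A \<in> bases \<I> \<longrightarrow> insert e2 A \<in> bases \<I> \<longrightarrow> e1 = e2)"

definition union_minimal :: "'a set \<Rightarrow> 'a set set \<Rightarrow> bool" where
  "union_minimal E \<I> \<longleftrightarrow>
     (\<forall>\<I>1. matroid E \<I>1 \<longrightarrow> \<Union>(bases \<I>1) = \<Union>(bases \<I>) \<longrightarrow>
        bases \<I>1 \<subseteq> bases \<I> \<longrightarrow> bases \<I>1 = bases \<I>)"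

end

theory Submission
  imports Defs
begin

lemma m_fin: "matroid E I \<Longrightarrow> A \<in> I \<Longrightarrow> finite A"
  unfolding matroid_def by (meson finite_subset)

lemma m_sub: "matroid E I \<Longrightarrow> B \<in> I \<Longrightarrow> A \<subseteq> B \<Longrightarrow> A \<in> I"
  unfolding matroid_def by blast

lemma m_aug: "matroid E I \<Longrightarrow> A \<in> I \<Longrightarrow> B \<in> I \<Longrightarrow> card A < card B \<Longrightarrow> \<exists>e\<in>B - A. insert e A \<in> I"
  unfolding matroid_def by blast

lemma bases_ne: assumes m: "matroid E I" shows "bases I \<noteq> {}"
proof -
  have fin: "finite I"
  proof -
    have "I \<subseteq> Pow E" using m unfolding matroid_def by blast
    moreover have "finite E" using m unfolding matroid_def by blast
    ultimately show ?thesis by (meson finite_Pow_iff finite_subset)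
  qed
  have ne: "I \<noteq> {}" using m unfolding matroid_def by blast
  obtain B where B: "B \<in> I" "\<forall>C\<in>I. card C \<le> card B"
  proof -
    obtain B where "B \<in> I" "\<forall>C\<in>I. card C \<le> card B"
    proof -
      have "Max (card ` I) \<in> card ` I" using fin ne by simp
      then obtain B where "B \<in> I" "card B = Max (card ` I)" by auto
      moreover have "\<forall>C\<in>I. card C \<le> Max (card ` I)" using fin by simp
      ultimately show ?thesis using that by simp
    qed
    then show ?thesis using that by blast
  qed
  have "B \<in> bases I"
    unfolding bases_def
  proof -
    have "C = B" if "C \<in> I" "B \<subseteq> C" for C
      using that B m_fin[OF m, of C] card_seteq by blast
    then show "B \<in> {B \<in> I. \<forall>C\<in>I. B \<subseteq> C \<longrightarrow> C = B}" using B by blast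
  qed
  then show ?thesis by blast
qed

lemma bases_I: "B \<in> bases I \<Longrightarrow> B \<in> I" unfolding bases_def by blast

lemma bases_card: assumes m: "matroid E I" and B: "B \<in> bases I" and C: "C \<in> bases I"
  shows "card B = card C"
proof -
  have "\<not> card B < card C" if h: "B \<in> bases I" "C \<in> bases I" for B C
  proof
    assume "card B < card C"
    then obtain e where "e \<in> C - B" "insert e B \<in> I" using m_aug[OF m, of B C] bases_I[OF h(1)] bases_I[OF h(2)] by blast
    then show False using h(1) unfolding bases_def by blast
  qed
  then show ?thesis using B C by (meson linorder_neqE_nat)
qed

lemma card_base: assumes m: "matroid E I" and A: "A \<in> I" and B: "B \<in> bases I" and c: "card A = card B"
  shows "A \<in> bases I"
  unfolding bases_def
proof -
  have "C = A" if C: "C \<in> I" "A \<subseteq> C" for C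
  proof (rule ccontr)
    assume "C \<noteq> A"
    then have "card A < card C" using C m_fin[OF m, of C] by (simp add: psubset_card_mono)
    then obtain e where "e \<in> C - B" "insert e B \<in> I" using m_aug[OF m, of B C] bases_I[OF B] C c by auto
    then show False using B unfolding bases_def by blast
  qed
  then show "A \<in> {B \<in> I. \<forall>C\<in>I. B \<subseteq> C \<longrightarrow> C = B}" using A by blast
qed

lemma mrank_eq: assumes m: "matroid E I" and B: "B \<in> bases I" shows "mrank I = card B"
proof -
  have "(SOME B. B \<in> bases I) \<in> bases I" using B by (rule someI)
  then show ?thesis unfolding mrank_def using bases_card[OF m] B by blast
qed

theorem theorem10:
  fixes E :: "'a set" and \<I> :: "'a set set"
  assumes "matroid E \<I>"
    and "mrank \<I> > 0"
    and "unique_expansion \<I>"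
  shows "union_minimal E \<I>"
  unfolding union_minimal_def
proof (intro allI impI)
  fix I1 assume m1: "matroid E I1" and U: "\<Union>(bases I1) = \<Union>(bases \<I>)"
    and S: "bases I1 \<subseteq> bases \<I>"
  note m = assms(1)
  obtain B0 where B0: "B0 \<in> bases I1" using bases_ne[OF m1] by blast
  define r where "r = mrank \<I>"
  have r0: "r = card B0" using mrank_eq[OF m] B0 S r_def by blast
  have r1: "mrank I1 = r" using mrank_eq[OF m1 B0] r0 by simp
  have main: "\<forall>B1. B1 \<in> bases I1 \<longrightarrow> card (B1 - B) = n \<longrightarrow> B \<in> bases I1"
    if B: "B \<in> bases \<I>" for B n
  proof (induction n)
    case 0
    show ?case
    proof (intro allI impI)
      fix B1 assume B1: "B1 \<in> bases I1" "card (B1 - B) = 0"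
      have "finite B1" using m_fin[OF m1] bases_I B1 by blast
      then have "B1 \<subseteq> B" using B1 by auto
      then have "B = B1" using B1 S B bases_I unfolding bases_def by blast
      then show "B \<in> bases I1" using B1 by simp
    qed
  next
    case (Suc n)
    show ?case
    proof (intro allI impI)
      fix B1 assume B1: "B1 \<in> bases I1" "card (B1 - B) = Suc n"
      obtain x where x: "x \<in> B1" "x \<notin> B"
        using B1(2) by (metis Diff_iff card.empty ex_in_conv nat.simps(3))
      define A where "A = B1 - {x}"
      have fB1: "finite B1" using m_fin[OF m1] bases_I B1 by blast
      have cB1: "card B1 = r" using mrank_eq[OF m1 B1(1)] r1 by simp
      have cA: "card A = r - 1" unfolding A_def using cB1 x fB1 by simp
      have AI1: "A \<in> I1" using m_sub[OF m1 bases_I[OF B1(1)]] A_def by blast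
      have B1I: "B1 \<in> bases \<I>" using B1 S by blast
      have AI: "A \<in> \<I>" using m_sub[OF m bases_I[OF B1I]] A_def by blast
      have cB: "card B = r" using mrank_eq[OF m B] r_def by simp
      have rpos: "r > 0" using assms(2) r_def by simp
      obtain e where e: "e \<in> B - A" "insert e A \<in> \<I>"
        using m_aug[OF m AI bases_I[OF B]] cA cB rpos by auto
      have fA: "finite A" using fB1 A_def by simp
      have cAe: "card (insert e A) = r" using e fA cA rpos by simp
      have Ae: "insert e A \<in> bases \<I>" using card_base[OF m e(2) B] cAe cB by simp
      have "e \<in> \<Union>(bases I1)" using U e B by blast
      then obtain B2 where B2: "B2 \<in> bases I1" "e \<in> B2" by blast
      have cB2: "card B2 = r" using mrank_eq[OF m1 B2(1)] r1 by simp
      obtain f where f: "f \<in> B2 - A" "insert f A \<in> I1"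
        using m_aug[OF m1 AI1 bases_I[OF B2(1)]] cA cB2 rpos by auto
      have cAf: "card (insert f A) = r" using f fA cA rpos by simp
      have Af: "insert f A \<in> bases I1" using card_base[OF m1 f(2) B2(1)] cAf cB2 by simp
      have sA: "A \<in> s_sets \<I>" unfolding s_sets_def using AI cA r_def by simp
      have "e = f" using assms(3) unfolding unique_expansion_def
        using B2 S sA Ae Af f by blast
      then have Ae1: "insert e A \<in> bases I1" using Af by simp
      have "insert e A - B = (B1 - B) - {x}" unfolding A_def using e x by auto
      then have "card (insert e A - B) = n" using B1(2) x fB1 by simp
      then show "B \<in> bases I1" using Suc.IH Ae1 by blast
    qed
  qed
  show "bases I1 = bases \<I>"
  proof
    show "bases \<I> \<subseteq> bases I1" using main B0 by blast
  qed (rule S)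
qed

end
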